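(* Let $n\ge2$, $0\le\delta<\frac1n$, let $P^0=[d_1\ \cdots\ d_{n+1}]$ be the canonical uniform simplex, and let $P^\delta=[d_1^\delta\ \cdots\ d^\delta_{n+1}]$ with $d_1^\delta=d_1$ and $d_i^\delta=\alpha(d_i+\delta e_1)$ for $2\le i\le n+1$, where $$\alpha=\frac{n}{\sqrt{n^2\delta^2-2n\delta+n^2}},\qquad \beta=\alpha^2\left(\frac{n\delta^2-2\delta-1}{n}\right),\qquad \gamma=-\alpha(1-\delta n)-(n-1).$$ Then: (i) $\alpha=\frac{1}{\|d_i+\delta e_1\|}$ for all $i\in\{2,\dots,n+1\}$; (ii) $\beta=(d_j^\delta)^\top d_k^\delta$ for all $2\le j,k\le n+1$ with $j\ne k$; (iii) $\beta\le-\frac1n$ and $1+\frac{\beta n}{1-\beta}>0$; (iv) $-n\le\gamma<0$.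
   Context: The canonical uniform simplex is the $n\times(n+1)$ matrix $P^0$ defined as follows, with $a_i=\sqrt{\frac{(n-i+1)(n+1)}{n(n-i+2)}}$ for $i=1,\dots,n$: for $1\le j\le n$, column $j$ has entry $-\frac{a_i}{n-i+1}$ in row $i<j$, entry $a_j$ in row $j$, and $0$ in rows $i>j$; column $n+1$ has entry $-\frac{a_i}{n-i+1}$ in every row $i$. $e_1$ is the first standard basis vector. *)

theory Defs
  imports "HOL-Analysis.Analysis"
begin

text \<open>Vectors of R^n are represented as functions nat => real, with components indexed by 1..n.\<close>

definition vinner :: "nat \<Rightarrow> (nat \<Rightarrow> real) \<Rightarrow> (nat \<Rightarrow> real) \<Rightarrow> real" where
  "vinner n x y = (\<Sum>r=1..n. x r * y r)"

definition vnorm :: "nat \<Rightarrow> (nat \<Rightarrow> real) \<Rightarrow> real" where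
  "vnorm n x = sqrt (vinner n x x)"

definition e1 :: "nat \<Rightarrow> real" where
  "e1 r = (if r = 1 then 1 else 0)"

definition simplex_a :: "nat \<Rightarrow> nat \<Rightarrow> real" where
  "simplex_a n i = sqrt ((real n - real i + 1) * (real n + 1) / (real n * (real n - real i + 2)))"

definition P0 :: "nat \<Rightarrow> nat \<Rightarrow> nat \<Rightarrow> real" where
  "P0 n i j =
     (if 1 \<le> i \<and> i \<le> n \<and> 1 \<le> j \<and> j \<le> n + 1 then
        (if j \<le> n then
           (if i < j then - simplex_a n i / (real n - real i + 1)
            else if i = j then simplex_a n j else 0)
         else - simplex_a n i / (real n - real i + 1))
      else 0)"

definition dcol :: "nat \<Rightarrow> nat \<Rightarrow> (nat \<Rightarrow> real)" where
  "dcol n j = (\<lambda>r. P0 n r j)"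

definition simplex_alpha :: "nat \<Rightarrow> real \<Rightarrow> real" where
  "simplex_alpha n \<delta> = real n / sqrt (real n ^ 2 * \<delta> ^ 2 - 2 * real n * \<delta> + real n ^ 2)"

definition dcol_delta :: "nat \<Rightarrow> real \<Rightarrow> nat \<Rightarrow> (nat \<Rightarrow> real)" where
  "dcol_delta n \<delta> j = (if j = 1 then dcol n 1
                        else (\<lambda>r. simplex_alpha n \<delta> * (dcol n j r + \<delta> * e1 r)))"

end

theory Submission
  imports Defs
begin

definition cc :: "nat \<Rightarrow> nat \<Rightarrow> real" where
  "cc n i = simplex_a n i / (real n - real i + 1)"

lemma alg1:
  fixes m N :: real assumes "m > 0" "N > 0"
  shows "(m * (N + 1) / (N * (m + 1))) / m ^ 2 = (N + 1) / N * (1 / m - 1 / (m + 1))"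
proof -
  have "m \<noteq> 0" "m + 1 \<noteq> 0" "N \<noteq> 0" "1 + m \<noteq> 0" using assms by auto
  thus ?thesis by (simp add: divide_simps power2_eq_square)
qed

lemma alg2:
  fixes m N :: real assumes "m > 0" "N > 0"
  shows "(N + 1) / N * (1 / (m+1) - 1 / (N + 1))
     + (N + 1) / N * (1 / m - 1 / (m+1)) = (N + 1) / N * (1 / m - 1 / (N + 1))"
proof -
  show ?thesis by (simp add: algebra_simps)
qed

lemma alg3:
  fixes m N :: real assumes "m > 0" "N > 0"
  shows "(N + 1) / N * (1 / (m+1) - 1 / (N + 1)) + m * (N + 1) / (N * (m + 1)) = 1"
proof -
  have "m \<noteq> 0" "m + 1 \<noteq> 0" "N \<noteq> 0" "1 + m \<noteq> 0" "N + 1 \<noteq> 0" "1 + N \<noteq> 0" using assms by auto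
  thus ?thesis by (simp add: divide_simps) (simp add: algebra_simps)
qed

lemma alg4:
  fixes m N :: real assumes "m > 0" "N > 0"
  shows "(N + 1) / N * (1 / (m+1) - 1 / (N + 1)) - (m * (N + 1) / (N * (m + 1))) / m = - 1 / N"
proof -
  have "m \<noteq> 0" "m + 1 \<noteq> 0" "N \<noteq> 0" "1 + m \<noteq> 0" "N + 1 \<noteq> 0" "1 + N \<noteq> 0" using assms by auto
  thus ?thesis by (simp add: divide_simps)
qed

lemma a_sq:
  assumes "1 \<le> i" "i \<le> n"
  shows "simplex_a n i ^ 2 = (real n - real i + 1) * (real n + 1) / (real n * (real n - real i + 2))"
proof -
  have "real i \<le> real n" using assms by simp
  hence "0 \<le> (real n - real i + 1) * (real n + 1) / (real n * (real n - real i + 2))"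
    by (intro divide_nonneg_nonneg mult_nonneg_nonneg) auto
  thus ?thesis unfolding simplex_a_def by simp
qed

lemma c_sq:
  assumes "1 \<le> i" "i \<le> n"
  shows "cc n i ^ 2 = (real n + 1) / real n * (1 / (real n - real i + 1) - 1 / (real n - real i + 2))"
proof -
  have h: "real i \<le> real n" "real n \<ge> 1" using assms by auto
  have "cc n i ^ 2 = simplex_a n i ^ 2 / (real n - real i + 1) ^ 2"
    unfolding cc_def by (simp add: power_divide)
  also have "\<dots> = (real n + 1) / real n * (1 / (real n - real i + 1) - 1 / (real n - real i + 2))"
  proof -
    define m where "m = real n - real i + 1"
    have m: "m > 0" "real n > 0" using h by (auto simp: m_def)
    have e: "real n - real i + 2 = m + 1" by (simp add: m_def)
    have "(m * (real n + 1) / (real n * (m + 1))) / m ^ 2 = (real n + 1) / real n * (1 / m - 1 / (m + 1))"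
      using alg1[of m "real n"] m by simp
    thus ?thesis unfolding a_sq[OF assms] e m_def[symmetric] .
  qed
  finally show ?thesis .
qed

lemma tele:
  assumes "j \<le> n"
  shows "(\<Sum>i=1..j. cc n i ^ 2) = (real n + 1) / real n * (1 / (real n - real j + 1) - 1 / (real n + 1))"
  using assms
proof (induction j)
  case 0
  then show ?case by simp
next
  case (Suc j)
  have "(\<Sum>i=1..Suc j. cc n i ^ 2) = (\<Sum>i=1..j. cc n i ^ 2) + cc n (Suc j) ^ 2"
    by simp
  also have "\<dots> = (real n + 1) / real n * (1 / (real n - real j + 1) - 1 / (real n + 1))
     + (real n + 1) / real n * (1 / (real n - real (Suc j) + 1) - 1 / (real n - real (Suc j) + 2))"
    using Suc by (simp add: c_sq)
  also have "\<dots> = (real n + 1) / real n * (1 / (real n - real (Suc j) + 1) - 1 / (real n + 1))"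
  proof -
    have "real n - real j \<noteq> 0" "real n - real j + 1 \<noteq> 0" "real n \<noteq> 0" "real n + 1 \<noteq> 0"
      using Suc.prems by auto
    define m where "m = real n - real j"
    have m: "m > 0" "real n > 0" using Suc.prems by (auto simp: m_def)
    have e: "real n - real (Suc j) + 1 = m" "real n - real (Suc j) + 2 = m + 1" "real n - real j + 1 = m + 1"
      by (auto simp: m_def)
    have "(real n + 1) / real n * (1 / (m+1) - 1 / (real n + 1))
     + (real n + 1) / real n * (1 / m - 1 / (m+1)) = (real n + 1) / real n * (1 / m - 1 / (real n + 1))"
      using alg2[of m "real n"] m by simp
    thus ?thesis unfolding e .
  qed
  finally show ?case .
qed

lemma P0_alt:
  assumes "1 \<le> r" "r \<le> n" "1 \<le> j" "j \<le> n + 1"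
  shows "P0 n r j = (if r < j then - cc n r else if r = j then simplex_a n j else 0)"
  using assms unfolding P0_def cc_def by auto

lemma sum_split:
  assumes "Suc j \<le> n" "\<And>r. r > Suc j \<Longrightarrow> f r = 0"
  shows "(\<Sum>r=1..n. f r) = (\<Sum>r=1..j. f r) + f (Suc j)"
proof -
  have "(\<Sum>r=1..n. f r) = (\<Sum>r=1..Suc j. f r)"
    by (rule sum.mono_neutral_right) (use assms in auto)
  thus ?thesis by simp
qed

lemma gram_same:
  assumes "1 \<le> j" "j \<le> n + 1" "1 \<le> n"
  shows "vinner n (dcol n j) (dcol n j) = 1"
proof (cases "j = n + 1")
  case True
  have "vinner n (dcol n j) (dcol n j) = (\<Sum>r=1..n. cc n r ^ 2)"
    unfolding vinner_def dcol_def
    by (rule sum.cong) (use assms True in \<open>auto simp: P0_alt power2_eq_square\<close>)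
  also have "\<dots> = 1"
  proof -
    have "real n > 0" using assms by simp
    hence "(real n + 1) / real n * (1 / (real n - real n + 1) - 1 / (real n + 1)) = 1"
      by (simp add: divide_simps)
    thus ?thesis using tele[of n n] by simp
  qed
  finally show ?thesis .
next
  case False
  then obtain j' where j: "j = Suc j'" "Suc j' \<le> n" using assms by (cases j) auto
  have "vinner n (dcol n j) (dcol n j) = (\<Sum>r=1..j'. P0 n r j * P0 n r j) + P0 n j j * P0 n j j"
    unfolding vinner_def dcol_def j
    by (rule sum_split) (use j in \<open>auto simp: P0_def\<close>)
  also have "(\<Sum>r=1..j'. P0 n r j * P0 n r j) = (\<Sum>r=1..j'. cc n r ^ 2)"
    by (rule sum.cong) (use j in \<open>auto simp: P0_alt power2_eq_square\<close>)
  also have "P0 n j j * P0 n j j = simplex_a n j ^ 2"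
    using j by (simp add: P0_alt power2_eq_square)
  also have "(\<Sum>r=1..j'. cc n r ^ 2) + simplex_a n j ^ 2 = 1"
  proof -
    define m where "m = real n - real j'"
    have m: "m > 0" "real n > 0" using j by (auto simp: m_def)
    have e: "real n - real j' + 1 = m + 1" "real n - real j + 1 = m" "real n - real j + 2 = m + 1"
      using j by (auto simp: m_def)
    have t: "(\<Sum>r=1..j'. cc n r ^ 2) = (real n + 1) / real n * (1 / (m+1) - 1 / (real n + 1))"
      using tele[of j' n] j e by simp
    have a: "simplex_a n j ^ 2 = m * (real n + 1) / (real n * (m + 1))"
    proof -
      have "1 \<le> j" "j \<le> n" using j by auto
      from a_sq[OF this] show ?thesis by (simp only: e)
    qed
    show ?thesis using alg3[OF m] unfolding t a .
  qed
  finally show ?thesis .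
qed

lemma gram_diff:
  assumes "1 \<le> j" "j < k" "k \<le> n + 1"
  shows "vinner n (dcol n j) (dcol n k) = - 1 / real n"
proof -
  obtain j' where j: "j = Suc j'" "Suc j' \<le> n" using assms by (cases j) auto
  have "vinner n (dcol n j) (dcol n k) = (\<Sum>r=1..j'. P0 n r j * P0 n r k) + P0 n j j * P0 n j k"
    unfolding vinner_def dcol_def j
    by (rule sum_split) (use j in \<open>auto simp: P0_def\<close>)
  also have "(\<Sum>r=1..j'. P0 n r j * P0 n r k) = (\<Sum>r=1..j'. cc n r ^ 2)"
    by (rule sum.cong) (use j assms in \<open>auto simp: P0_alt power2_eq_square\<close>)
  also have "P0 n j j * P0 n j k = - (simplex_a n j ^ 2 / (real n - real j + 1))"
    using j assms by (simp add: P0_alt power2_eq_square cc_def)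
  also have "(\<Sum>r=1..j'. cc n r ^ 2) + - (simplex_a n j ^ 2 / (real n - real j + 1)) = - 1 / real n"
  proof -
    define m where "m = real n - real j'"
    have m: "m > 0" "real n > 0" using j by (auto simp: m_def)
    have e: "real n - real j' + 1 = m + 1" "real n - real j + 1 = m" "real n - real j + 2 = m + 1"
      using j by (auto simp: m_def)
    have t: "(\<Sum>r=1..j'. cc n r ^ 2) = (real n + 1) / real n * (1 / (m+1) - 1 / (real n + 1))"
      using tele[of j' n] j e by simp
    have a: "simplex_a n j ^ 2 = m * (real n + 1) / (real n * (m + 1))"
    proof -
      have "1 \<le> j" "j \<le> n" using j by auto
      from a_sq[OF this] show ?thesis by (simp only: e)
    qed
    show ?thesis using alg4[OF m] unfolding t a e by simp
  qed
  finally show ?thesis .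
qed

lemma row1:
  assumes "2 \<le> i" "i \<le> n + 1"
  shows "dcol n i 1 = - 1 / real n"
proof -
  have n: "real n > 0" using assms by simp
  have "simplex_a n 1 = 1"
    unfolding simplex_a_def using n by simp
  thus ?thesis unfolding dcol_def using assms by (simp add: P0_alt cc_def)
qed

lemma sum_e1: "1 \<le> n \<Longrightarrow> (\<Sum>r=1..n. x r * e1 r) = x (1::nat)"
  unfolding e1_def by (simp add: if_distrib cong: if_cong)

lemma expand:
  assumes "1 \<le> n"
  shows "vinner n (\<lambda>r. s * (x r + d * e1 r)) (\<lambda>r. s * (y r + d * e1 r))
       = s^2 * (vinner n x y + d * x 1 + d * y 1 + d^2)"
proof -
  have "vinner n (\<lambda>r. s * (x r + d * e1 r)) (\<lambda>r. s * (y r + d * e1 r))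
     = (\<Sum>r=1..n. s^2 * (x r * y r) + s^2 * d * (x r * e1 r) + s^2 * d * (y r * e1 r) + s^2 * d^2 * e1 r)"
    unfolding vinner_def
    by (rule sum.cong) (auto simp: e1_def power2_eq_square algebra_simps)
  also have "\<dots> = s^2 * vinner n x y + s^2 * d * x 1 + s^2 * d * y 1 + s^2 * d^2 * 1"
  proof -
    have h: "(\<Sum>r=1..n. x r * e1 r) = x 1" "(\<Sum>r=1..n. y r * e1 r) = y 1"
      "sum e1 {1..n} = 1"
      using sum_e1[OF assms, of x] sum_e1[OF assms, of y] sum_e1[OF assms, of "\<lambda>_. 1"] by auto
    show ?thesis
      by (simp only: sum.distrib sum_distrib_left[symmetric] h vinner_def)
  qed
  finally show ?thesis by (simp add: algebra_simps)
qed

theorem lemma9: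
  fixes n :: nat and \<delta> :: real
  assumes "n \<ge> 2" and "0 \<le> \<delta>" and "\<delta> < 1 / real n"
  defines "\<alpha> \<equiv> simplex_alpha n \<delta>"
  defines "\<beta> \<equiv> \<alpha>\<^sup>2 * ((real n * \<delta>\<^sup>2 - 2 * \<delta> - 1) / real n)"
  defines "\<gamma> \<equiv> - \<alpha> * (1 - \<delta> * real n) - (real n - 1)"
  shows "(\<forall>i\<in>{2..n+1}. \<alpha> = 1 / vnorm n (\<lambda>r. dcol n i r + \<delta> * e1 r))
       \<and> (\<forall>j\<in>{2..n+1}. \<forall>k\<in>{2..n+1}. j \<noteq> k \<longrightarrow>
             \<beta> = vinner n (dcol_delta n \<delta> j) (dcol_delta n \<delta> k))
       \<and> \<beta> \<le> - 1 / real n \<and> 1 + \<beta> * real n / (1 - \<beta>) > 0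
       \<and> - real n \<le> \<gamma> \<and> \<gamma> < 0"
proof -
  define N where "N = real n"
  have N: "N \<ge> 2" using assms(1) by (simp add: N_def)
  have dN: "\<delta> * N < 1" using assms(3) N by (simp add: N_def field_simps)
  define Q where "Q = 1 - 2 * \<delta> / N + \<delta>^2"
  have Q: "Q > 0"
  proof -
    have "\<delta> * 2 \<le> \<delta> * N" using mult_left_mono[OF N assms(2)] .
    hence "2 * \<delta> / N < 1" using dN N by (simp add: field_simps)
    thus ?thesis unfolding Q_def by (smt (verit) zero_le_power2)
  qed
  have D: "N^2 * \<delta>^2 - 2 * N * \<delta> + N^2 = N^2 * Q"
    unfolding Q_def using N by (simp add: field_simps power2_eq_square)
  have sQ: "sqrt Q > 0" using Q by simp
  have al: "\<alpha> = 1 / sqrt Q"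
  proof -
    have "\<alpha> = N / sqrt (N^2 * Q)" using D unfolding \<alpha>_def simplex_alpha_def N_def by simp
    also have "\<dots> = N / (N * sqrt Q)" using N by (simp add: real_sqrt_mult)
    also have "\<dots> = 1 / sqrt Q" using N by simp
    finally show ?thesis .
  qed
  have al2: "\<alpha>^2 = 1 / Q" using al Q by (simp add: power_divide)
  have n1: "1 \<le> n" using assms(1) by simp
  have i: "\<alpha> = 1 / vnorm n (\<lambda>r. dcol n i r + \<delta> * e1 r)" if "i \<in> {2..n+1}" for i
  proof -
    have "vinner n (\<lambda>r. dcol n i r + \<delta> * e1 r) (\<lambda>r. dcol n i r + \<delta> * e1 r) = Q"
      using expand[OF n1, of 1 "dcol n i" \<delta> "dcol n i"] gram_same[of i n] row1[of i n] that n1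
      by (simp add: Q_def N_def)
    thus ?thesis unfolding vnorm_def al by simp
  qed
  define B where "B = \<delta>^2 - 2 * \<delta> / N - 1 / N"
  have beta: "\<beta> = B / Q"
    unfolding \<beta>_def al2 B_def N_def[symmetric] using N Q by (simp add: field_simps)
  have ii: "\<beta> = vinner n (dcol_delta n \<delta> j) (dcol_delta n \<delta> k)"
    if "j \<in> {2..n+1}" "k \<in> {2..n+1}" "j \<noteq> k" for j k
  proof -
    have g: "vinner n (dcol n j) (dcol n k) = - 1 / N"
    proof (cases "j < k")
      case True thus ?thesis using gram_diff[of j k n] that by (simp add: N_def)
    next
      case False
      hence "k < j" using that by simp
      thus ?thesis using gram_diff[of k j n] that
        by (simp add: N_def vinner_def mult.commute)
    qed
    have "vinner n (dcol_delta n \<delta> j) (dcol_delta n \<delta> k)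
        = \<alpha>^2 * (vinner n (dcol n j) (dcol n k) + \<delta> * dcol n j 1 + \<delta> * dcol n k 1 + \<delta>^2)"
      using expand[OF n1, of \<alpha> "dcol n j" \<delta> "dcol n k"] that
      by (simp add: dcol_delta_def \<alpha>_def)
    also have "\<dots> = \<alpha>^2 * B"
      using g row1[of j n] row1[of k n] that by (simp add: B_def N_def algebra_simps)
    finally show ?thesis using al2 beta by simp
  qed
  have key1: "N * B + Q \<le> 0"
  proof -
    have "N * B + Q = (N + 1) * \<delta> * (\<delta> - 2 / N)"
      unfolding B_def Q_def using N by (simp add: field_simps power2_eq_square)
    moreover have "\<delta> - 2 / N \<le> 0" using dN N by (simp add: field_simps)
    ultimately show ?thesis using assms(2) N
      by (simp add: mult_nonneg_nonpos)
  qed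
  have iii1: "\<beta> \<le> - 1 / real n"
  proof -
    have "B \<le> (- 1 / N) * Q" using key1 N by (simp add: field_simps)
    hence "B / Q \<le> - 1 / N" using Q by (simp add: pos_divide_le_eq)
    thus ?thesis using beta Q by (simp add: N_def)
  qed
  have "- 1 / real n < 0" using assms(1) by simp
  hence bneg: "\<beta> < 0" using iii1 by linarith
  have key2: "Q + (N - 1) * B = (1 - N * \<delta>)^2 / N"
    unfolding B_def Q_def using N by (simp add: field_simps power2_eq_square)
  have iii2: "1 + \<beta> * real n / (1 - \<beta>) > 0"
  proof -
    have "(1 - N * \<delta>)^2 / N > 0" using dN N by (simp add: mult.commute)
    hence "Q + (N - 1) * B > 0" using key2 by simp
    hence "(Q + (N - 1) * B) / Q > 0" using Q by simp
    moreover have "(Q + (N - 1) * B) / Q = 1 + (N - 1) * \<beta>"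
      using Q beta by (simp add: add_divide_distrib)
    ultimately have "1 + (N - 1) * \<beta> > 0" by simp
    hence "(1 - \<beta>) + \<beta> * N > 0" by (simp add: algebra_simps)
    hence "((1 - \<beta>) + \<beta> * N) / (1 - \<beta>) > 0" using bneg by simp
    moreover have "((1 - \<beta>) + \<beta> * N) / (1 - \<beta>) = 1 + \<beta> * N / (1 - \<beta>)"
      using bneg by (simp add: add_divide_distrib)
    ultimately show ?thesis by (simp add: N_def)
  qed
  have iv: "- real n \<le> \<gamma> \<and> \<gamma> < 0"
  proof -
    have p: "1 - \<delta> * N > 0" using dN by simp
    have "(1 - \<delta> * N)^2 - Q = (N^2 - 1) * \<delta> * (\<delta> - 2 / N)"
      unfolding Q_def using N by (simp add: field_simps power2_eq_square)
    moreover have "\<delta> - 2 / N \<le> 0" using dN N by (simp add: field_simps)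
    moreover have "N^2 - 1 \<ge> 0" using one_le_power[of N 2] N by simp
    moreover have "(N^2 - 1) * \<delta> \<ge> 0" using assms(2) \<open>N^2 - 1 \<ge> 0\<close> by simp
    ultimately have "(1 - \<delta> * N)^2 - Q \<le> 0"
      using mult_nonneg_nonpos[of "(N^2 - 1) * \<delta>" "\<delta> - 2 / N"] by simp
    hence "(1 - \<delta> * N)^2 \<le> Q" by simp
    hence "1 - \<delta> * N \<le> sqrt Q" by (rule real_le_rsqrt)
    hence "(1 - \<delta> * N) / sqrt Q \<le> 1" using sQ by (simp add: pos_divide_le_eq)
    hence le: "\<alpha> * (1 - \<delta> * N) \<le> 1" using al by simp
    have pos: "\<alpha> * (1 - \<delta> * N) > 0" using al sQ p by simp
    show ?thesis using le pos N unfolding \<gamma>_def N_def by auto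
  qed
  show ?thesis using i ii iii1 iii2 iv by blast
qed

end
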